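(* On the probability space $((0,1),\mathcal{B},\mathcal{L})$ ($\mathcal{B}$ the Borel $\sigma$-algebra, $\mathcal{L}$ Lebesgue measure), the digit sequence $\{d_n\}_{n\ge1}$ of the signed Engel expansion (defined on the irrationals, a set of full measure) is a time-homogeneous Markov chain with initial distribution $$\mathcal{L}(d_1=2k)=\frac{2}{(2k-1)(2k+1)},\qquad k\in\mathbb{N},$$ and one-step transition probabilities, for $k,l\in\mathbb{N}$ with $l\ge k$, $$\mathcal{L}(d_{n+1}=2l\mid d_n=2k)=\begin{cases}\frac{1}{2k},& l=k,\\ \frac{(2k-1)(2k+1)}{k(2l-1)(2l+1)},& l\ge k+1.\end{cases}$$
   Context: Define $T\colon[0,1)\to[0,1)$ by: for $k\in\mathbb{N}$, $Tx=\lceil 1/x\rceil x-1$ if $x\in(\frac{1}{2k},\frac{1}{2k-1})$; $Tx=1-\lfloor 1/x\rfloor x$ if $x\in(\frac{1}{2k+1},\frac{1}{2k})$; $Tx=0$ if $x\in\{0\}\cup\{1/n\colon n\ge 2\}$. For $x\in(0,1)$, $d_1(x)=\lceil 1/x\rceil$ if $x\in[\frac{1}{2k},\frac{1}{2k-1})$ for some $k\in\mathbb{N}$, and $d_1(x)=\lfloor 1/x\rfloor$ if $x\in[\frac{1}{2k+1},\frac{1}{2k})$ for some $k\in\mathbb{N}$; $d_{n+1}(x)=d_1(T^nx)$. For irrational $x$ all $d_n(x)$ are even positive integers. *)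

theory Defs
  imports "HOL-Analysis.Analysis"
begin

definition sed_T :: "real \<Rightarrow> real" where
  "sed_T x =
    (if \<exists>k::nat. k \<ge> 1 \<and> 1 / (2 * real k) < x \<and> x < 1 / (2 * real k - 1)
     then real_of_int (ceiling (1 / x)) * x - 1
     else if \<exists>k::nat. k \<ge> 1 \<and> 1 / (2 * real k + 1) < x \<and> x < 1 / (2 * real k)
     then 1 - real_of_int (floor (1 / x)) * x
     else 0)"

definition sed_d1 :: "real \<Rightarrow> nat" where
  "sed_d1 x =
    (if \<exists>k::nat. k \<ge> 1 \<and> 1 / (2 * real k) \<le> x \<and> x < 1 / (2 * real k - 1)
     then nat (ceiling (1 / x))
     else if \<exists>k::nat. k \<ge> 1 \<and> 1 / (2 * real k + 1) \<le> x \<and> x < 1 / (2 * real k)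
     then nat (floor (1 / x))
     else 0)"

definition sed_digit :: "nat \<Rightarrow> real \<Rightarrow> nat" where
  "sed_digit n x = sed_d1 ((sed_T ^^ (n - 1)) x)"

definition sed_space :: "real measure" where
  "sed_space = restrict_space lborel {0<..<1}"

definition sed_trans :: "nat \<Rightarrow> nat \<Rightarrow> real" where
  "sed_trans k l =
    (if l = k then 1 / (2 * real k)
     else if l \<ge> k + 1 then (2 * real k - 1) * (2 * real k + 1)
                              / (real k * (2 * real l - 1) * (2 * real l + 1))
     else 0)"

end

theory Submission
  imports Defs
begin


lemma inv_lt_iff: "(y::real) > 0 \<Longrightarrow> p > 0 \<Longrightarrow> (1/p < y) = (1/y < p)"
  by (simp add: field_simps)
lemma lt_inv_iff: "(y::real) > 0 \<Longrightarrow> p > 0 \<Longrightarrow> (y < 1/p) = (p < 1/y)"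
  by (simp add: field_simps)
lemma inv_le_iff: "(y::real) > 0 \<Longrightarrow> p > 0 \<Longrightarrow> (1/p \<le> y) = (1/y \<le> p)"
  by (simp add: field_simps)

lemma nat_eq_from_real: "real j < real k + 1 \<Longrightarrow> real k < real j + 1 \<Longrightarrow> j = k"
proof -
  assume "real j < real k + 1" "real k < real j + 1"
  then have "j < k + 1" "k < j + 1" by (metis of_nat_1 of_nat_add of_nat_less_iff)+
  then show ?thesis by arith
qed

lemma nat_between_false: "real j < real k \<Longrightarrow> real k < real j + 1 \<Longrightarrow> False"
proof -
  assume "real j < real k" "real k < real j + 1"
  then have "j < k" "k < j + 1" by (metis of_nat_1 of_nat_add of_nat_less_iff)+
  then show ?thesis by arith
qed

lemma d1_eq_iff:
  assumes k: "k \<ge> 1"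
  shows "sed_d1 y = 2 * k \<longleftrightarrow> 1 / (2 * real k + 1) < y \<and> y < 1 / (2 * real k - 1)"
proof (cases "y > 0")
  case False
  have "\<not> (1 / (2 * real k + 1) < y)" using False k by (smt (verit) divide_pos_pos of_nat_0_le_iff)
  moreover have "\<not> (\<exists>k::nat. k \<ge> 1 \<and> 1 / (2 * real k) \<le> y \<and> y < 1 / (2 * real k - 1))"
  proof
    assume "\<exists>k::nat. k \<ge> 1 \<and> 1 / (2 * real k) \<le> y \<and> y < 1 / (2 * real k - 1)"
    then obtain j :: nat where "j \<ge> 1" "1 / (2 * real j) \<le> y" by blast
    moreover have "0 < 1 / (2 * real j)" using \<open>j \<ge> 1\<close> by simp
    ultimately show False using False by linarith
  qed
  moreover have "\<not> (\<exists>k::nat. k \<ge> 1 \<and> 1 / (2 * real k + 1) \<le> y \<and> y < 1 / (2 * real k))"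
  proof
    assume "\<exists>k::nat. k \<ge> 1 \<and> 1 / (2 * real k + 1) \<le> y \<and> y < 1 / (2 * real k)"
    then obtain j :: nat where "j \<ge> 1" "1 / (2 * real j + 1) \<le> y" by blast
    moreover have "0 < 1 / (2 * real j + 1)" by simp
    ultimately show False using False by linarith
  qed
  ultimately show ?thesis using k unfolding sed_d1_def by auto
next
  case True
  let ?z = "1 / y"
  have z: "?z > 0" using True by simp
  have c1: "(1 / (2 * real j) \<le> y \<and> y < 1 / (2 * real j - 1)) \<longleftrightarrow> (2 * real j - 1 < ?z \<and> ?z \<le> 2 * real j)"
    if "j \<ge> 1" for j :: nat
  proof -
    have p: "0 < 2 * real j" "0 < 2 * real j - 1" using that by auto
    show ?thesis using inv_le_iff[OF True p(1)] lt_inv_iff[OF True p(2)] by blast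
  qed
  have c2: "(1 / (2 * real j + 1) \<le> y \<and> y < 1 / (2 * real j)) \<longleftrightarrow> (2 * real j < ?z \<and> ?z \<le> 2 * real j + 1)"
    if "j \<ge> 1" for j :: nat
  proof -
    have p: "0 < 2 * real j" "0 < 2 * real j + 1" using that by auto
    show ?thesis using inv_le_iff[OF True p(2)] lt_inv_iff[OF True p(1)] by blast
  qed
  have goal: "(1 / (2 * real k + 1) < y \<and> y < 1 / (2 * real k - 1)) \<longleftrightarrow> (2 * real k - 1 < ?z \<and> ?z < 2 * real k + 1)"
  proof -
    have p: "0 < 2 * real k + 1" "0 < 2 * real k - 1" using k by auto
    show ?thesis using inv_lt_iff[OF True p(1)] lt_inv_iff[OF True p(2)] by blast
  qed
  show ?thesis
  proof (cases "\<exists>j::nat. j \<ge> 1 \<and> 1 / (2 * real j) \<le> y \<and> y < 1 / (2 * real j - 1)")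
    case True
    then obtain j where j: "j \<ge> 1" "2 * real j - 1 < ?z" "?z \<le> 2 * real j" using c1 by blast
    have "ceiling ?z = 2 * int j" using j by (simp add: ceiling_eq_iff)
    then have "sed_d1 y = 2 * j" using True by (simp add: sed_d1_def nat_mult_distrib)
    moreover have "(2 * j = 2 * k) \<longleftrightarrow> (2 * real k - 1 < ?z \<and> ?z < 2 * real k + 1)"
    proof
      assume "2 * j = 2 * k" then show "(2 * real k - 1 < ?z \<and> ?z < 2 * real k + 1)" using j by simp
    next
      assume "(2 * real k - 1 < ?z \<and> ?z < 2 * real k + 1)"
      then have "real j < real k + 1" "real k < real j + 1" using j by linarith+
      then show "2 * j = 2 * k" using nat_eq_from_real by simp
    qed
    ultimately show ?thesis using goal by simp
  next
    case nc1: False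
    show ?thesis
    proof (cases "\<exists>j::nat. j \<ge> 1 \<and> 1 / (2 * real j + 1) \<le> y \<and> y < 1 / (2 * real j)")
      case True
      then obtain j where j: "j \<ge> 1" "2 * real j < ?z" "?z \<le> 2 * real j + 1" using c2 by blast
      have d: "sed_d1 y = nat (floor ?z)" unfolding sed_d1_def using True nc1 by (simp only: if_False if_True)
      show ?thesis
      proof (cases "?z = 2 * real j + 1")
        case True
        then have "?z = real_of_int (2 * int j + 1)" by simp
        then have "floor ?z = 2 * int j + 1" by (metis floor_of_int)
        then have "sed_d1 y = 2 * j + 1" using d by (simp add: nat_add_distrib nat_mult_distrib)
        moreover have "\<not> (2 * real k - 1 < ?z \<and> ?z < 2 * real k + 1)"
        proof
          assume "(2 * real k - 1 < ?z \<and> ?z < 2 * real k + 1)"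
          then have "real j < real k" "real k < real j + 1" using True by linarith+
          then show False by (rule nat_between_false)
        qed
        moreover have "2 * j + 1 \<noteq> 2 * k" by presburger
        ultimately show ?thesis using goal by simp
      next
        case False
        then have "floor ?z = 2 * int j" using j by (simp add: floor_eq_iff)
        then have "sed_d1 y = 2 * j" using d by (simp add: nat_mult_distrib)
        moreover have "(2 * j = 2 * k) \<longleftrightarrow> (2 * real k - 1 < ?z \<and> ?z < 2 * real k + 1)"
        proof
          assume "2 * j = 2 * k" then show "(2 * real k - 1 < ?z \<and> ?z < 2 * real k + 1)" using j False by simp
        next
          assume "(2 * real k - 1 < ?z \<and> ?z < 2 * real k + 1)"
          then have "real j < real k + 1" "real k < real j + 1" using j by linarith+
          then show "2 * j = 2 * k" using nat_eq_from_real by simp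
        qed
        ultimately show ?thesis using goal by simp
      qed
    next
      case nc2: False
      then have "sed_d1 y = 0" unfolding sed_d1_def using nc1 by (simp only: if_False)
      moreover have "\<not> (2 * real k - 1 < ?z \<and> ?z < 2 * real k + 1)"
      proof
        assume a: "(2 * real k - 1 < ?z \<and> ?z < 2 * real k + 1)"
        show False
        proof (cases "?z \<le> 2 * real k")
          case True then show False using nc1 a k c1 by blast
        next
          case False then show False using nc2 a k c2 by force
        qed
      qed
      ultimately show ?thesis using goal k by simp
    qed
  qed
qed



lemma A_iff: "y > 0 \<Longrightarrow> j \<ge> 1 \<Longrightarrow> (1 / (2 * real j) < y \<and> y < 1 / (2 * real j - 1)) \<longleftrightarrow> (2 * real j - 1 < 1 / y \<and> 1 / y < 2 * real j)"
proof -
  assume y: "y > 0" and j: "j \<ge> 1"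
  have p: "0 < 2 * real j" "0 < 2 * real j - 1" using j by auto
  show ?thesis using inv_lt_iff[OF y p(1)] lt_inv_iff[OF y p(2)] by blast
qed

lemma B_iff: "y > 0 \<Longrightarrow> j \<ge> 1 \<Longrightarrow> (1 / (2 * real j + 1) < y \<and> y < 1 / (2 * real j)) \<longleftrightarrow> (2 * real j < 1 / y \<and> 1 / y < 2 * real j + 1)"
proof -
  assume y: "y > 0" and j: "j \<ge> 1"
  have p: "0 < 2 * real j" "0 < 2 * real j + 1" using j by auto
  show ?thesis using inv_lt_iff[OF y p(2)] lt_inv_iff[OF y p(1)] by blast
qed

lemma D_iff: "y > 0 \<Longrightarrow> j \<ge> 1 \<Longrightarrow> (1 / (2 * real j + 1) < y \<and> y < 1 / (2 * real j - 1)) \<longleftrightarrow> (2 * real j - 1 < 1 / y \<and> 1 / y < 2 * real j + 1)"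
proof -
  assume y: "y > 0" and j: "j \<ge> 1"
  have p: "0 < 2 * real j + 1" "0 < 2 * real j - 1" using j by auto
  show ?thesis using inv_lt_iff[OF y p(1)] lt_inv_iff[OF y p(2)] by blast
qed

lemma D_pos: "k \<ge> 1 \<Longrightarrow> 1 / (2 * real k + 1) < y \<Longrightarrow> y > 0"
  by (smt (verit) divide_pos_pos of_nat_0_le_iff)

lemma T_on_D:
  assumes k: "k \<ge> 1" and D: "1 / (2 * real k + 1) < y" "y < 1 / (2 * real k - 1)"
  shows "sed_T y = \<bar>2 * real k * y - 1\<bar>"
proof -
  have y: "y > 0" using D_pos[OF k D(1)] .
  let ?z = "1 / y"
  have yz: "y = 1 / ?z" by simp
  have z: "2 * real k - 1 < ?z" "?z < 2 * real k + 1" using D_iff[OF y k] D by auto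
  show ?thesis
  proof (cases "?z < 2 * real k")
    case True
    have Ak: "1 / (2 * real k) < y \<and> y < 1 / (2 * real k - 1)" using A_iff[OF y k] z True by blast
    have "ceiling ?z = 2 * int k" using z True by (simp add: ceiling_eq_iff)
    then have "sed_T y = 2 * real k * y - 1" using Ak k unfolding sed_T_def by auto
    moreover have "2 * real k * y - 1 > 0" using True y by (simp add: field_simps)
    ultimately show ?thesis by simp
  next
    case False
    show ?thesis
    proof (cases "?z = 2 * real k")
      case True
      have nA: "\<not> (\<exists>j::nat. j \<ge> 1 \<and> 1 / (2 * real j) < y \<and> y < 1 / (2 * real j - 1))"
      proof
        assume "\<exists>j::nat. j \<ge> 1 \<and> 1 / (2 * real j) < y \<and> y < 1 / (2 * real j - 1)"
        then obtain j :: nat where "j \<ge> 1" "2 * real j - 1 < ?z" "?z < 2 * real j" using A_iff[OF y] by blast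
        then have "real j < real k + 1/2" "real k < real j" using True by linarith+
        then show False using nat_between_false[of k j] by linarith
      qed
      have nB: "\<not> (\<exists>j::nat. j \<ge> 1 \<and> 1 / (2 * real j + 1) < y \<and> y < 1 / (2 * real j))"
      proof
        assume "\<exists>j::nat. j \<ge> 1 \<and> 1 / (2 * real j + 1) < y \<and> y < 1 / (2 * real j)"
        then obtain j :: nat where "j \<ge> 1" "2 * real j < ?z" "?z < 2 * real j + 1" using B_iff[OF y] by blast
        then have "real j < real k" "real k < real j + 1/2" using True by linarith+
        then show False using nat_between_false[of j k] by linarith
      qed
      have "sed_T y = 0" unfolding sed_T_def using nA nB by (simp only: if_False)
      moreover have "2 * real k * y - 1 = 0" using True y k by (simp add: field_simps)
      ultimately show ?thesis by simp
    next
      case False2: False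
      have gt: "2 * real k < ?z" using False False2 by linarith
      have nA: "\<not> (\<exists>j::nat. j \<ge> 1 \<and> 1 / (2 * real j) < y \<and> y < 1 / (2 * real j - 1))"
      proof
        assume "\<exists>j::nat. j \<ge> 1 \<and> 1 / (2 * real j) < y \<and> y < 1 / (2 * real j - 1)"
        then obtain j :: nat where "j \<ge> 1" "2 * real j - 1 < ?z" "?z < 2 * real j" using A_iff[OF y] by blast
        then have "real k < real j" "real j < real k + 1" using gt z by linarith+
        then show False using nat_between_false[of k j] by linarith
      qed
      have Bk: "1 / (2 * real k + 1) < y \<and> y < 1 / (2 * real k)" using B_iff[OF y k] z gt by blast
      have "floor ?z = 2 * int k" using z gt by (simp add: floor_eq_iff)
      then have "sed_T y = 1 - 2 * real k * y" using Bk k nA unfolding sed_T_def by auto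
      moreover have "2 * real k * y - 1 < 0" using gt y by (simp add: field_simps)
      ultimately show ?thesis by simp
    qed
  qed
qed

lemma T_nonzero:
  assumes "sed_T y \<noteq> 0"
  shows "\<exists>j::nat. j \<ge> 1 \<and> 1 / (2 * real j + 1) < y \<and> y < 1 / (2 * real j - 1)"
proof (cases "\<exists>j::nat. j \<ge> 1 \<and> 1 / (2 * real j) < y \<and> y < 1 / (2 * real j - 1)")
  case True
  then obtain j :: nat where j: "j \<ge> 1" "1 / (2 * real j) < y" "y < 1 / (2 * real j - 1)" by blast
  have "1 / (2 * real j + 1) < 1 / (2 * real j)" using j by (simp add: frac_less2)
  then show ?thesis using j by (meson less_trans)
next
  case False
  show ?thesis
  proof (cases "\<exists>j::nat. j \<ge> 1 \<and> 1 / (2 * real j + 1) < y \<and> y < 1 / (2 * real j)")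
    case True
    then obtain j :: nat where j: "j \<ge> 1" "1 / (2 * real j + 1) < y" "y < 1 / (2 * real j)" by blast
    have "1 / (2 * real j) < 1 / (2 * real j - 1)" using j by (simp add: frac_less2)
    then show ?thesis using j by (meson less_trans)
  next
    case False2: False
    have "sed_T y = 0" unfolding sed_T_def using False False2 by (simp only: if_False)
    then show ?thesis using assms by simp
  qed
qed

lemma T_bound:
  assumes k: "k \<ge> 1" and D: "1 / (2 * real k + 1) < y" "y < 1 / (2 * real k - 1)"
  shows "sed_T y < 1 / (2 * real k - 1)"
proof -
  have k1: "2 * real k - 1 > 0" "2 * real k + 1 > 0" using k by auto
  have y1: "y * (2 * real k - 1) < 1" using D(2) k1 by (simp add: field_simps)
  have "(2 * real k * y - 1) * (2 * real k - 1) = 2 * real k * (y * (2 * real k - 1)) - (2 * real k - 1)"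
    by (simp add: algebra_simps)
  also have "... < 2 * real k * 1 - (2 * real k - 1)"
    using y1 k1 by (intro diff_strict_right_mono mult_strict_left_mono) auto
  finally have "(2 * real k * y - 1) * (2 * real k - 1) < 1" by simp
  then have a: "2 * real k * y - 1 < 1 / (2 * real k - 1)"
    using k1 by (simp add: less_divide_eq)
  have y2: "1 < y * (2 * real k + 1)" using D(1) k1 by (simp add: field_simps)
  have "(1 - 2 * real k * y) * (2 * real k + 1) = (2 * real k + 1) - 2 * real k * (y * (2 * real k + 1))"
    by (simp add: algebra_simps)
  also have "... < (2 * real k + 1) - 2 * real k * 1"
    using y2 k1 k by (intro diff_strict_left_mono mult_strict_left_mono) auto
  finally have "(1 - 2 * real k * y) * (2 * real k + 1) < 1" by simp
  then have b: "1 - 2 * real k * y < 1 / (2 * real k + 1)"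
    using k1 by (simp add: less_divide_eq)
  have c: "1 / (2 * real k + 1) < 1 / (2 * real k - 1)" using k1 by (simp add: frac_less2)
  show ?thesis using T_on_D[OF k D] a b c by linarith
qed

lemma T_range: "0 \<le> sed_T y \<and> sed_T y < 1"
proof (cases "sed_T y = 0")
  case False
  then obtain j :: nat where j: "j \<ge> 1" "1 / (2 * real j + 1) < y" "y < 1 / (2 * real j - 1)"
    using T_nonzero by blast
  have "1 / (2 * real j - 1) \<le> 1" using j by simp
  then show ?thesis using T_on_D[OF j] T_bound[OF j] by simp
qed simp



lemma T_meas[measurable]: "sed_T \<in> borel_measurable borel"
  unfolding sed_T_def[abs_def] by measurable

lemma d1_meas[measurable]: "sed_d1 \<in> borel \<rightarrow>\<^sub>M count_space UNIV"
  unfolding sed_d1_def[abs_def] by measurable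

lemma Tn_meas[measurable]: "(sed_T ^^ n) \<in> borel_measurable borel"
proof (induction n)
  case 0 then show ?case by simp
next
  case (Suc n) then show ?case by (simp add: measurable_compose[OF _ T_meas])
qed

abbreviation M where "M \<equiv> sed_space"

lemma space_M: "space M = {0<..<1}"
  by (simp add: sed_space_def space_restrict_space)

lemma M_meas_borel: "g \<in> borel \<rightarrow>\<^sub>M N \<Longrightarrow> g \<in> M \<rightarrow>\<^sub>M N"
  unfolding sed_space_def by (rule measurable_restrict_space1) simp

lemma TnM_meas[measurable]: "(sed_T ^^ n) \<in> borel_measurable M"
  by (rule M_meas_borel) simp

lemma digit_meas: "sed_digit n \<in> M \<rightarrow>\<^sub>M count_space UNIV"
proof -
  have "sed_digit n = sed_d1 \<circ> (sed_T ^^ (n - 1))" by (auto simp: sed_digit_def fun_eq_iff)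
  then show ?thesis by (simp add: M_meas_borel measurable_comp[OF Tn_meas d1_meas])
qed

lemma id_M_meas[measurable]: "(\<lambda>x. x) \<in> borel_measurable M"
  by (rule M_meas_borel) simp

lemma finM: "finite_measure M"
proof -
  have "emeasure M (space M) = emeasure lborel {0<..<(1::real)}"
    unfolding sed_space_def by (simp add: emeasure_restrict_space space_restrict_space)
  then show ?thesis by (intro finite_measureI) simp
qed

interpretation MF: finite_measure M by (rule finM)

lemma measure_M: "S \<subseteq> {0<..<1} \<Longrightarrow> measure M S = measure lborel S"
  unfolding sed_space_def by (rule measure_restrict_space) auto

lemma sets_collect:
  assumes "A \<in> sets M" "Measurable.pred M P"
  shows "{x\<in>A. P x} \<in> sets M"
proof -
  have "{x\<in>A. P x} = A \<inter> {x\<in>space M. P x}" using sets.sets_into_space[OF assms(1)] by auto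
  then show ?thesis using assms by auto
qed



definition hh :: "nat \<Rightarrow> real \<Rightarrow> real" where
  "hh k t = min t (1 / (2 * real k - 1)) + min t (1 / (2 * real k + 1))"

lemma ba_p:
  fixes p u :: real
  assumes p: "p \<ge> 2" and u: "u \<ge> 0"
  shows "min (1/(p-1)) ((1+u)/p) - max (1/(p+1)) ((1-u)/p) = (min u (1/(p-1)) + min u (1/(p+1))) / p"
proof -
  have p1: "p - 1 > 0" "p + 1 > 0" "p > 0" using p by auto
  have e1: "(1+u)/p \<le> 1/(p-1) \<longleftrightarrow> u \<le> 1/(p-1)" using p1 by (simp add: field_simps)
  have e2: "1/(p+1) \<le> (1-u)/p \<longleftrightarrow> u \<le> 1/(p+1)" using p1 by (simp add: field_simps)
  have e3: "1/(p+1) \<le> 1/(p-1)" using p1 by (simp add: frac_le)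
  show ?thesis
  proof (cases "u \<le> 1/(p+1)")
    case True
    then have "u \<le> 1/(p-1)" using e3 by linarith
    then have "min (1/(p-1)) ((1+u)/p) = (1+u)/p" "max (1/(p+1)) ((1-u)/p) = (1-u)/p"
        "min u (1/(p-1)) = u" "min u (1/(p+1)) = u" using True e1 e2 by auto
    note eqs = this
    show ?thesis unfolding eqs using p1 by (simp add: field_simps)
  next
    case False
    show ?thesis
    proof (cases "u \<le> 1/(p-1)")
      case True
      then have "min (1/(p-1)) ((1+u)/p) = (1+u)/p" "max (1/(p+1)) ((1-u)/p) = 1/(p+1)"
        "min u (1/(p-1)) = u" "min u (1/(p+1)) = 1/(p+1)" using False e1 e2 by auto
      note eqs = this
      show ?thesis unfolding eqs using p1 by (simp add: field_simps)
    next
      case False2: False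
      then have "min (1/(p-1)) ((1+u)/p) = 1/(p-1)" "max (1/(p+1)) ((1-u)/p) = 1/(p+1)"
        "min u (1/(p-1)) = 1/(p-1)" "min u (1/(p+1)) = 1/(p+1)" using False e1 e2 by auto
      note eqs = this
      have pp: "p*p \<ge> 2*2" using p by (intro mult_mono) auto
      then have q: "p*p - 1 > 0" by linarith
      have "p*(p*p) - p = p * (p*p - 1)" by (simp add: algebra_simps)
      then have "p*(p*p) - p > 0" using q p1 by simp
      note q this
      then show ?thesis unfolding eqs using p1 by (simp add: field_simps)
    qed
  qed
qed

lemma key_iff_p:
  fixes p y s t :: real
  assumes p: "p \<ge> 2" and st: "0 \<le> s" "s \<le> t"
  shows "(1/(p+1) < y \<and> y < 1/(p-1) \<and> s < \<bar>p*y-1\<bar> \<and> \<bar>p*y-1\<bar> < t) \<longleftrightarrow>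
    (max (1/(p+1)) ((1-t)/p) < y \<and> y < max (1/(p+1)) ((1-s)/p)) \<or>
    (min (1/(p-1)) ((1+s)/p) < y \<and> y < min (1/(p-1)) ((1+t)/p))"
proof -
  have p1: "p - 1 > 0" "p + 1 > 0" "p > 0" using p by auto
  have f1: "(1-t)/p < y \<longleftrightarrow> 1 - p*y < t" using p1 by (simp add: field_simps)
  have f2: "y < (1-s)/p \<longleftrightarrow> s < 1 - p*y" using p1 by (simp add: field_simps)
  have f3: "(1+s)/p < y \<longleftrightarrow> s < p*y - 1" using p1 by (simp add: field_simps)
  have f4: "y < (1+t)/p \<longleftrightarrow> p*y - 1 < t" using p1 by (simp add: field_simps)
  have f5: "y < 1/p \<longleftrightarrow> p*y < 1" using p1 by (simp add: field_simps)
  have f6: "1/(p+1) < 1/p" "1/p < 1/(p-1)" using p1 by (simp_all add: frac_less2)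
  show ?thesis
    unfolding max_less_iff_conj less_max_iff_disj min_less_iff_conj min_less_iff_disj f1 f2 f3 f4
    using f5 f6 st by (cases "p*y < 1") (auto simp: abs_if)
qed



definition goodp :: "real set \<Rightarrow> (real \<Rightarrow> real) \<Rightarrow> (real \<Rightarrow> real) \<Rightarrow> bool" where
  "goodp A f G \<longleftrightarrow> A \<in> sets M \<and> f \<in> borel_measurable M \<and> (\<forall>x\<in>A. 0 \<le> f x \<and> f x < 1)
    \<and> (\<forall>v. measure M {x\<in>A. f x = v} = 0)
    \<and> (\<forall>u v. 0 \<le> u \<longrightarrow> u \<le> v \<longrightarrow> v \<le> 1 \<longrightarrow> measure M {x\<in>A. u < f x \<and> f x < v} = G v - G u)"

lemma step:
  assumes g: "goodp A f G" and k: "k \<ge> 1"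
    and aff: "\<And>y. 1/(2*real k+1) \<le> y \<Longrightarrow> y \<le> 1/(2*real k-1) \<Longrightarrow> G y = \<sigma>*y + \<tau>"
  shows "goodp {x\<in>A. sed_d1 (f x) = 2*k} (\<lambda>x. sed_T (f x)) (\<lambda>t. \<sigma>/(2*real k) * hh k t)"
proof -
  have A: "A \<in> sets M" and fm[measurable]: "f \<in> borel_measurable M"
    and rng: "\<And>x. x\<in>A \<Longrightarrow> 0 \<le> f x \<and> f x < 1"
    and pts: "\<And>v. measure M {x\<in>A. f x = v} = 0"
    and ivl: "\<And>u v. 0 \<le> u \<Longrightarrow> u \<le> v \<Longrightarrow> v \<le> 1 \<Longrightarrow> measure M {x\<in>A. u < f x \<and> f x < v} = G v - G u"
    using g unfolding goodp_def by auto
  define p where "p = 2 * real k"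
  have p: "p \<ge> 2" using k by (simp add: p_def)
  have p1: "p - 1 > 0" "p + 1 > 0" "p > 0" using p by auto
  have pinv: "1/(p+1) < 1/p" "1/p < 1/(p-1)" "1/(p-1) \<le> 1" using p1 p by (simp_all add: frac_less2)
  let ?A' = "{x\<in>A. sed_d1 (f x) = 2*k}"
  have A'sets: "?A' \<in> sets M" by (rule sets_collect[OF A]) measurable
  have Dk: "sed_d1 y = 2*k \<longleftrightarrow> 1/(p+1) < y \<and> y < 1/(p-1)" for y
    using d1_eq_iff[OF k] by (simp add: p_def)
  have Ton: "1/(p+1) < y \<Longrightarrow> y < 1/(p-1) \<Longrightarrow> sed_T y = \<bar>p*y - 1\<bar>" for y
    using T_on_D[OF k] by (simp add: p_def)
  have sets1: "{x\<in>A. P (f x)} \<in> sets M" if "Measurable.pred borel P" for P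
    by (rule sets_collect[OF A]) (use that in measurable)
  have meas_c: "{x\<in>A. f x = c} \<in> sets M" for c by (rule sets_collect[OF A]) measurable
  have meas_i: "{x\<in>A. a < f x \<and> f x < b} \<in> sets M" for a b by (rule sets_collect[OF A]) measurable
  have Tfm: "(\<lambda>x. sed_T (f x)) \<in> borel_measurable M" by measurable
  have rng': "\<forall>x\<in>?A'. 0 \<le> sed_T (f x) \<and> sed_T (f x) < 1" using T_range by blast
  have pts': "measure M {x\<in>?A'. sed_T (f x) = v} = 0" for v
  proof -
    let ?S = "{x\<in>?A'. sed_T (f x) = v}"
    let ?U1 = "{x\<in>A. f x = (1-v)/p}" and ?U2 = "{x\<in>A. f x = (1+v)/p}"
    have sub: "?S \<subseteq> ?U1 \<union> ?U2"
    proof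
      fix x assume x: "x \<in> ?S"
      then have "\<bar>p * f x - 1\<bar> = v" using Ton Dk by auto
      then have "p * f x = 1 - v \<or> p * f x = 1 + v" by (auto simp: abs_if)
      then have "f x = (1-v)/p \<or> f x = (1+v)/p" using p1 by (auto simp: field_simps)
      then show "x \<in> ?U1 \<union> ?U2" using x by auto
    qed
    have "measure M ?S \<le> measure M (?U1 \<union> ?U2)"
      by (rule MF.finite_measure_mono[OF sub]) (use meas_c in auto)
    also have "\<dots> \<le> measure M ?U1 + measure M ?U2"
      by (rule measure_subadditive) (use meas_c in auto)
    also have "\<dots> = 0" using pts by simp
    finally show "measure M ?S = 0" using measure_nonneg[of M ?S] by linarith
  qed
  have ivl': "measure M {x\<in>?A'. s < sed_T (f x) \<and> sed_T (f x) < t} =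
        \<sigma> / (2 * real k) * hh k t - \<sigma> / (2 * real k) * hh k s"
    if s0: "0 \<le> s" and st: "s \<le> t" and t1: "t \<le> 1" for s t :: real
  proof -
    define \<alpha> where "\<alpha> u = max (1/(p+1)) ((1-u)/p)" for u
    define \<beta> where "\<beta> u = min (1/(p-1)) ((1+u)/p)" for u
    have seteq: "{x\<in>?A'. s < sed_T (f x) \<and> sed_T (f x) < t} =
        {x\<in>A. \<alpha> t < f x \<and> f x < \<alpha> s} \<union> {x\<in>A. \<beta> s < f x \<and> f x < \<beta> t}"
    proof -
      have "(sed_d1 y = 2*k \<and> s < sed_T y \<and> sed_T y < t) \<longleftrightarrow>
          (\<alpha> t < y \<and> y < \<alpha> s) \<or> (\<beta> s < y \<and> y < \<beta> t)" for y
      proof -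
        have "(sed_d1 y = 2*k \<and> s < sed_T y \<and> sed_T y < t) \<longleftrightarrow>
            (1/(p+1) < y \<and> y < 1/(p-1) \<and> s < \<bar>p*y-1\<bar> \<and> \<bar>p*y-1\<bar> < t)"
          using Dk Ton by auto
        also have "\<dots> \<longleftrightarrow> (\<alpha> t < y \<and> y < \<alpha> s) \<or> (\<beta> s < y \<and> y < \<beta> t)"
          unfolding \<alpha>_def \<beta>_def by (rule key_iff_p[OF p s0 st])
        finally show ?thesis .
      qed
      then show ?thesis by auto
    qed
    have a_le: "\<alpha> u \<le> 1/p" if "u \<ge> 0" for u
      unfolding \<alpha>_def using pinv that p1 by (auto simp: divide_right_mono)
    have b_ge: "\<beta> u \<ge> 1/p" if "u \<ge> 0" for u
      unfolding \<beta>_def using pinv that p1 by (auto simp: divide_right_mono)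
    have a_ge: "\<alpha> u \<ge> 1/(p+1)" for u unfolding \<alpha>_def by simp
    have b_le: "\<beta> u \<le> 1/(p-1)" for u unfolding \<beta>_def by simp
    have "(1-t)/p \<le> (1-s)/p" "(1+s)/p \<le> (1+t)/p" using st p1 by (simp_all add: divide_right_mono)
    then have a_mono: "\<alpha> t \<le> \<alpha> s" and b_mono: "\<beta> s \<le> \<beta> t" unfolding \<alpha>_def \<beta>_def by auto
    have t0: "t \<ge> 0" using s0 st by linarith
    have pos1: "0 < 1/(p+1)" using p1 by simp
    have disj: "{x\<in>A. \<alpha> t < f x \<and> f x < \<alpha> s} \<inter> {x\<in>A. \<beta> s < f x \<and> f x < \<beta> t} = {}"
      using a_le[OF s0] b_ge[OF s0] by auto
    have "measure M {x\<in>?A'. s < sed_T (f x) \<and> sed_T (f x) < t} =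
        measure M {x\<in>A. \<alpha> t < f x \<and> f x < \<alpha> s} + measure M {x\<in>A. \<beta> s < f x \<and> f x < \<beta> t}"
      unfolding seteq by (rule MF.finite_measure_Union[OF meas_i meas_i disj])
    also have "\<dots> = (G (\<alpha> s) - G (\<alpha> t)) + (G (\<beta> t) - G (\<beta> s))"
    proof -
      have "measure M {x\<in>A. \<alpha> t < f x \<and> f x < \<alpha> s} = G (\<alpha> s) - G (\<alpha> t)"
        apply (rule ivl) using a_ge[of t] pos1 a_mono a_le[OF s0] pinv by linarith+
      moreover have "measure M {x\<in>A. \<beta> s < f x \<and> f x < \<beta> t} = G (\<beta> t) - G (\<beta> s)"
        apply (rule ivl) using b_ge[OF s0] pos1 b_mono b_le[of t] pinv by linarith+
      ultimately show ?thesis by simp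
    qed
    also have "\<dots> = \<sigma> * ((\<beta> t - \<alpha> t) - (\<beta> s - \<alpha> s))"
    proof -
      have "G (\<alpha> s) = \<sigma> * \<alpha> s + \<tau>" "G (\<alpha> t) = \<sigma> * \<alpha> t + \<tau>"
        "G (\<beta> s) = \<sigma> * \<beta> s + \<tau>" "G (\<beta> t) = \<sigma> * \<beta> t + \<tau>"
        using aff a_ge a_le[OF s0] a_le[OF t0] b_ge[OF s0] b_ge[OF t0] b_le pinv
        unfolding p_def by (meson less_imp_le order_trans)+
      then show ?thesis by (simp add: algebra_simps)
    qed
    also have "\<dots> = \<sigma> / (2 * real k) * hh k t - \<sigma> / (2 * real k) * hh k s"
    proof -
      have e1: "\<beta> t - \<alpha> t = hh k t / p" and e2: "\<beta> s - \<alpha> s = hh k s / p"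
        using ba_p[OF p t0] ba_p[OF p s0] unfolding \<alpha>_def \<beta>_def hh_def p_def by simp_all
      show ?thesis unfolding e1 e2 using p1 unfolding p_def[symmetric] by (simp add: field_simps)
    qed
    finally show "measure M {x\<in>?A'. s < sed_T (f x) \<and> sed_T (f x) < t} =
        \<sigma> / (2 * real k) * hh k t - \<sigma> / (2 * real k) * hh k s" .
  qed
  show ?thesis unfolding goodp_def using A'sets Tfm rng' pts' ivl' by blast
qed



lemma goodp_base: "goodp (space M) (\<lambda>x. x) (\<lambda>t. t)"
proof -
  have pts: "measure M {x\<in>space M. x = v} = 0" for v
  proof -
    have "{x\<in>space M. x = v} \<subseteq> {0<..<1}" by (auto simp: space_M)
    then have "measure M {x\<in>space M. x = v} = measure lborel {x\<in>space M. x = v}" by (rule measure_M)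
    also have "\<dots> = 0"
    proof (cases "v \<in> space M")
      case True then have "{x\<in>space M. x = v} = {v}" by auto
      then show ?thesis by (simp add: measure_def)
    next
      case False then have e: "{x\<in>space M. x = v} = {}" by auto
      show ?thesis unfolding e by simp
    qed
    finally show ?thesis .
  qed
  have ivl: "measure M {x\<in>space M. u < x \<and> x < v} = v - u" if "0 \<le> u" "u \<le> v" "v \<le> 1" for u v :: real
  proof -
    have e: "{x\<in>space M. u < x \<and> x < v} = {u<..<v}" using that by (auto simp: space_M)
    show ?thesis unfolding e using that by (subst measure_M) auto
  qed
  show ?thesis unfolding goodp_def using pts ivl sets.top[of M] by (auto simp: space_M)
qed

lemma hh0: "k \<ge> 1 \<Longrightarrow> hh k 0 = 0"
  unfolding hh_def by (simp add: min_def)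

lemma hh1: "k \<ge> 1 \<Longrightarrow> hh k 1 = 1/(2*real k - 1) + 1/(2*real k + 1)"
proof -
  assume k: "k \<ge> 1"
  have "1/(2*real k - 1) \<le> 1" "1/(2*real k + 1) \<le> 1" using k by simp_all
  then show ?thesis unfolding hh_def by (simp add: min_def)
qed

lemma goodp_total:
  assumes "goodp A f G" shows "measure M A = G 1 - G 0"
proof -
  have A: "A \<in> sets M" and fm[measurable]: "f \<in> borel_measurable M"
    and rng: "\<And>x. x\<in>A \<Longrightarrow> 0 \<le> f x \<and> f x < 1"
    and pts: "\<And>v. measure M {x\<in>A. f x = v} = 0"
    and ivl: "\<And>u v. 0 \<le> u \<Longrightarrow> u \<le> v \<Longrightarrow> v \<le> 1 \<Longrightarrow> measure M {x\<in>A. u < f x \<and> f x < v} = G v - G u"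
    using assms unfolding goodp_def by auto
  have e: "A = {x\<in>A. 0 < f x \<and> f x < 1} \<union> {x\<in>A. f x = 0}" using rng by force
  have "measure M A = measure M {x\<in>A. 0 < f x \<and> f x < 1} + measure M {x\<in>A. f x = 0}"
    by (subst e, rule MF.finite_measure_Union) (auto intro: sets_collect[OF A])
  then show ?thesis using pts ivl[of 0 1] by simp
qed

lemma goodp_G_cong: "goodp A f G \<Longrightarrow> (\<And>t. G t = G' t) \<Longrightarrow> goodp A f G'"
  unfolding goodp_def by simp

lemma goodp_empty: "f \<in> borel_measurable M \<Longrightarrow> goodp {} f (\<lambda>t. 0)"
  unfolding goodp_def by simp

lemma goodp_Un:
  assumes gA: "goodp A f G" and gB: "goodp B f H" and d: "A \<inter> B = {}"
  shows "goodp (A \<union> B) f (\<lambda>t. G t + H t)"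
proof -
  have A: "A \<in> sets M" and B: "B \<in> sets M" and fm[measurable]: "f \<in> borel_measurable M"
    using gA gB unfolding goodp_def by auto
  have un: "measure M {x\<in>A \<union> B. P x} = measure M {x\<in>A. P x} + measure M {x\<in>B. P x}"
    if "Measurable.pred M P" for P
  proof -
    have "{x\<in>A \<union> B. P x} = {x\<in>A. P x} \<union> {x\<in>B. P x}" by auto
    moreover have "measure M ({x\<in>A. P x} \<union> {x\<in>B. P x}) = measure M {x\<in>A. P x} + measure M {x\<in>B. P x}"
      by (rule MF.finite_measure_Union) (use d sets_collect[OF A that] sets_collect[OF B that] in auto)
    ultimately show ?thesis by simp
  qed
  have pts: "measure M {x\<in>A \<union> B. f x = v} = 0" for v
    using gA gB un[of "\<lambda>x. f x = v"] unfolding goodp_def by simp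
  have ivl: "measure M {x\<in>A \<union> B. u < f x \<and> f x < v} = (G v + H v) - (G u + H u)"
    if "0 \<le> u" "u \<le> v" "v \<le> 1" for u v
    using gA gB un[of "\<lambda>x. u < f x \<and> f x < v"] that unfolding goodp_def by simp
  show ?thesis unfolding goodp_def using gA gB pts ivl unfolding goodp_def by auto
qed

lemma goodp_UN:
  assumes "finite J" "disjoint_family_on B J" "\<forall>j\<in>J. goodp (B j) f (G j)" "f \<in> borel_measurable M"
  shows "goodp (\<Union>j\<in>J. B j) f (\<lambda>t. \<Sum>j\<in>J. G j t)"
  using assms
proof (induction J rule: finite_induct)
  case empty then show ?case using goodp_empty by simp
next
  case (insert j J)
  have d: "B j \<inter> (\<Union>i\<in>J. B i) = {}"
    using insert.prems(1) insert.hyps(2) unfolding disjoint_family_on_def by fastforce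
  have IH: "goodp (\<Union>i\<in>J. B i) f (\<lambda>t. \<Sum>i\<in>J. G i t)"
    using insert by (auto simp: disjoint_family_on_def)
  have "goodp (B j \<union> (\<Union>i\<in>J. B i)) f (\<lambda>t. G j t + (\<Sum>i\<in>J. G i t))"
    by (rule goodp_Un[OF _ IH d]) (use insert.prems in auto)
  then show ?case using insert.hyps by simp
qed

definition sig :: "nat \<Rightarrow> nat \<Rightarrow> real \<Rightarrow> real" where
  "sig a k c = (if k < a then 0 else if k = a then c else 2 * c)"

lemma sig_nonneg: "c \<ge> 0 \<Longrightarrow> sig a k c \<ge> 0"
  unfolding sig_def by simp

lemma affine:
  assumes a: "a \<ge> 1" and k: "k \<ge> 1"
  shows "\<exists>\<tau>. \<forall>y. 1/(2*real k+1) \<le> y \<longrightarrow> y \<le> 1/(2*real k-1) \<longrightarrow> c * hh a y = sig a k c * y + \<tau>"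
proof (cases "k < a")
  case True
  then have "2*real k + 1 \<le> 2*real a - 1" by linarith
  then have "1/(2*real a - 1) \<le> 1/(2*real k+1)" using k by (intro frac_le) auto
  moreover have "1/(2*real a + 1) \<le> 1/(2*real a - 1)" using a by (intro frac_le) auto
  ultimately have "\<forall>y. 1/(2*real k+1) \<le> y \<longrightarrow> c * hh a y = sig a k c * y + c * (1/(2*real a - 1) + 1/(2*real a + 1))"
    using True unfolding hh_def sig_def by (auto simp: min_def)
  then show ?thesis by blast
next
  case False
  show ?thesis
  proof (cases "k = a")
    case True
    have "\<forall>y. 1/(2*real k+1) \<le> y \<longrightarrow> y \<le> 1/(2*real k-1) \<longrightarrow> c * hh a y = sig a k c * y + c * (1/(2*real a + 1))"
      using True unfolding hh_def sig_def by (auto simp: min_def algebra_simps)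
    then show ?thesis by blast
  next
    case False2: False
    then have "2*real a + 1 \<le> 2*real k - 1" using False by linarith
    then have "1/(2*real k - 1) \<le> 1/(2*real a+1)" using a by (intro frac_le) auto
    moreover have "1/(2*real a + 1) \<le> 1/(2*real a - 1)" using a by (intro frac_le) auto
    ultimately have "\<forall>y. y \<le> 1/(2*real k-1) \<longrightarrow> c * hh a y = sig a k c * y + 0"
      using False False2 unfolding hh_def sig_def by (auto simp: min_def algebra_simps)
    then show ?thesis by blast
  qed
qed

lemma step_hh:
  assumes g: "goodp A f (\<lambda>t. c * hh a t)" and a: "a \<ge> 1" and k: "k \<ge> 1"
  shows "goodp {x\<in>A. sed_d1 (f x) = 2*k} (\<lambda>x. sed_T (f x)) (\<lambda>t. sig a k c/(2*real k) * hh k t)"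
proof -
  obtain \<tau> where "\<forall>y. 1/(2*real k+1) \<le> y \<longrightarrow> y \<le> 1/(2*real k-1) \<longrightarrow> c * hh a y = sig a k c * y + \<tau>"
    using affine[OF a k] by blast
  then show ?thesis by (intro step[OF g k]) auto
qed

lemma ratio:
  assumes g: "goodp A f (\<lambda>t. c * hh a t)" and c: "c \<ge> 0" and a: "a \<ge> 1" and l: "l \<ge> 1"
    and pos: "measure M A > 0"
  shows "measure M {x\<in>A. sed_d1 (f x) = 2*l} / measure M A = sed_trans a l"
proof -
  have mA: "measure M A = c * (1/(2*real a - 1) + 1/(2*real a + 1))"
    using goodp_total[OF g] hh0[OF a] hh1[OF a] by simp
  have mA': "measure M {x\<in>A. sed_d1 (f x) = 2*l} = sig a l c/(2*real l) * (1/(2*real l - 1) + 1/(2*real l + 1))"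
    using goodp_total[OF step_hh[OF g a l]] hh0[OF l] hh1[OF l] by simp
  have cpos: "c > 0" using pos mA c a
    by (metis less_eq_real_def mult_eq_0_iff)
  have a1: "2*real a - 1 > 0" "2*real a + 1 > 0" "real a > 0" using a by auto
  have l1: "2*real l - 1 > 0" "2*real l + 1 > 0" "real l > 0" using l by auto
  have "real a * real a \<ge> 1 * 1" "real l * real l \<ge> 1 * 1" using a l by (intro mult_mono; simp)+
  then have sq: "real a * (real a * 4) \<noteq> 1" "real l * (real l * 4) \<noteq> 1" by linarith+
  show ?thesis
  proof (cases "l < a")
    case True then show ?thesis unfolding mA' sig_def sed_trans_def by simp
  next
    case False
    show ?thesis
    proof (cases "l = a")
      case True then show ?thesis unfolding mA mA' sig_def sed_trans_def
        using cpos a1 sq by (simp add: field_simps)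
    next
      case False2: False
      then have "l \<ge> a + 1" using False by simp
      then show ?thesis unfolding mA mA' sig_def sed_trans_def
        using cpos a1 l1 sq False False2 by (simp add: field_simps)
    qed
  qed
qed



lemma base1:
  assumes k: "k \<ge> 1"
  shows "goodp {x\<in>space M. sed_d1 x = 2*k} (sed_T ^^ 1) (\<lambda>t. 1/(2*real k) * hh k t)"
proof -
  have "goodp {x\<in>space M. sed_d1 x = 2*k} (\<lambda>x. sed_T x) (\<lambda>t. 1/(2*real k) * hh k t)"
    using step[OF goodp_base k, of 1 0] by simp
  moreover have "(sed_T ^^ 1) = (\<lambda>x. sed_T x)" by (simp add: fun_eq_iff)
  ultimately show ?thesis by simp
qed

lemma Tn_Suc: "(\<lambda>x. sed_T ((sed_T ^^ n) x)) = sed_T ^^ Suc n"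
  by (simp add: fun_eq_iff)

lemma claim3:
  "n \<ge> 1 \<Longrightarrow> (\<forall>i\<in>{1..n}. a i \<ge> 1) \<Longrightarrow>
   \<exists>c\<ge>0. goodp {x\<in>space M. \<forall>i\<in>{1..n}. sed_digit i x = 2 * a i} (sed_T ^^ n) (\<lambda>t. c * hh (a n) t)"
proof (induction n)
  case 0 then show ?case by simp
next
  case (Suc n)
  show ?case
  proof (cases "n = 0")
    case True
    have e: "{x\<in>space M. \<forall>i\<in>{1..Suc n}. sed_digit i x = 2 * a i} = {x\<in>space M. sed_d1 x = 2 * a 1}"
      using True by (auto simp: sed_digit_def)
    have "a 1 \<ge> 1" using Suc.prems True by auto
    from base1[OF this] show ?thesis unfolding e using True by (intro exI[of _ "1/(2*real (a 1))"]) simp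
  next
    case False
    then obtain c where c: "c \<ge> 0" and g: "goodp {x\<in>space M. \<forall>i\<in>{1..n}. sed_digit i x = 2 * a i} (sed_T ^^ n) (\<lambda>t. c * hh (a n) t)"
      using Suc by auto
    have an: "a n \<ge> 1" and aS: "a (Suc n) \<ge> 1" using Suc.prems False by auto
    have e: "{x\<in>space M. \<forall>i\<in>{1..Suc n}. sed_digit i x = 2 * a i} =
      {x\<in>{x\<in>space M. \<forall>i\<in>{1..n}. sed_digit i x = 2 * a i}. sed_d1 ((sed_T ^^ n) x) = 2 * a (Suc n)}"
      by (auto simp: sed_digit_def atLeastAtMostSuc_conv)
    have "goodp {x\<in>space M. \<forall>i\<in>{1..Suc n}. sed_digit i x = 2 * a i} (sed_T ^^ Suc n)
       (\<lambda>t. sig (a n) (a (Suc n)) c/(2*real (a (Suc n))) * hh (a (Suc n)) t)"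
      unfolding e Tn_Suc[symmetric] by (rule step_hh[OF g an aS])
    moreover have "sig (a n) (a (Suc n)) c/(2*real (a (Suc n))) \<ge> 0" using sig_nonneg[OF c] by simp
    ultimately show ?thesis by blast
  qed
qed

lemma claim4:
  "n \<ge> 1 \<Longrightarrow> \<forall>k\<ge>1. \<exists>c\<ge>0. goodp {x\<in>space M. sed_digit n x = 2 * k} (sed_T ^^ n) (\<lambda>t. c * hh k t)"
proof (induction n)
  case 0 then show ?case by simp
next
  case (Suc n)
  show ?case
  proof (intro allI impI)
    fix k :: nat assume k: "k \<ge> 1"
    show "\<exists>c\<ge>0. goodp {x\<in>space M. sed_digit (Suc n) x = 2 * k} (sed_T ^^ Suc n) (\<lambda>t. c * hh k t)"
    proof (cases "n = 0")
      case True
      have e: "{x\<in>space M. sed_digit (Suc n) x = 2 * k} = {x\<in>space M. sed_d1 x = 2 * k}"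
        using True by (auto simp: sed_digit_def)
      from base1[OF k] show ?thesis unfolding e using True by (intro exI[of _ "1/(2*real k)"]) simp
    next
      case False
      define E where "E j = {x\<in>space M. sed_digit n x = 2 * j}" for j
      have "\<forall>j. \<exists>c. j \<ge> 1 \<longrightarrow> c \<ge> 0 \<and> goodp (E j) (sed_T ^^ n) (\<lambda>t. c * hh j t)"
        using Suc False unfolding E_def by auto
      then obtain cf where cf: "\<And>j. j \<ge> 1 \<Longrightarrow> cf j \<ge> 0 \<and> goodp (E j) (sed_T ^^ n) (\<lambda>t. cf j * hh j t)"
        by metis
      define B where "B j = {x\<in>E j. sed_d1 ((sed_T ^^ n) x) = 2 * k}" for j
      have gB: "goodp (B j) (sed_T ^^ Suc n) (\<lambda>t. sig j k (cf j)/(2*real k) * hh k t)" if "j \<in> {1..k}" for j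
        unfolding B_def Tn_Suc[symmetric] using that cf[of j] k by (intro step_hh) auto
      have disj: "disjoint_family_on B {1..k}"
        unfolding disjoint_family_on_def B_def E_def by auto
      have gU: "goodp (\<Union>j\<in>{1..k}. B j) (sed_T ^^ Suc n) (\<lambda>t. \<Sum>j\<in>{1..k}. sig j k (cf j)/(2*real k) * hh k t)"
        by (rule goodp_UN) (use gB disj in auto)
      have seq: "{x\<in>space M. sed_digit (Suc n) x = 2 * k} = (\<Union>j\<in>{1..k}. B j)"
      proof
        show "(\<Union>j\<in>{1..k}. B j) \<subseteq> {x\<in>space M. sed_digit (Suc n) x = 2 * k}"
          unfolding B_def E_def by (auto simp: sed_digit_def)
      next
        show "{x\<in>space M. sed_digit (Suc n) x = 2 * k} \<subseteq> (\<Union>j\<in>{1..k}. B j)"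
        proof
          fix x assume x: "x \<in> {x\<in>space M. sed_digit (Suc n) x = 2 * k}"
          obtain m where m: "n = Suc m" using False by (cases n) auto
          define y where "y = (sed_T ^^ m) x"
          have Tn: "(sed_T ^^ n) x = sed_T y" unfolding y_def m by simp
          have d: "sed_d1 (sed_T y) = 2 * k" using x Tn by (simp add: sed_digit_def)
          then have Dk: "1 / (2 * real k + 1) < sed_T y" "sed_T y < 1 / (2 * real k - 1)"
            using d1_eq_iff[OF k] by auto
          have "sed_T y \<noteq> 0" using Dk(1) D_pos[OF k Dk(1)] by simp
          then obtain j :: nat where j: "j \<ge> 1" "1 / (2 * real j + 1) < y" "y < 1 / (2 * real j - 1)"
            using T_nonzero by blast
          have dj: "sed_digit n x = 2 * j" using d1_eq_iff[OF j(1)] j unfolding sed_digit_def y_def m by simp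
          have "sed_T y < 1 / (2 * real j - 1)" by (rule T_bound[OF j])
          then have lt: "1 / (2 * real k + 1) < 1 / (2 * real j - 1)" using Dk by linarith
          have "j \<le> k"
          proof (rule ccontr)
            assume "\<not> j \<le> k"
            then have "2 * real k + 1 \<le> 2 * real j - 1" by linarith
            then have "1 / (2 * real j - 1) \<le> 1 / (2 * real k + 1)" using k by (intro frac_le) auto
            then show False using lt by linarith
          qed
          then show "x \<in> (\<Union>j\<in>{1..k}. B j)"
            using j(1) x dj d Tn unfolding B_def E_def by auto
        qed
      qed
      have "goodp {x\<in>space M. sed_digit (Suc n) x = 2 * k} (sed_T ^^ Suc n)
          (\<lambda>t. (\<Sum>j\<in>{1..k}. sig j k (cf j)/(2*real k)) * hh k t)"
        unfolding seq by (rule goodp_G_cong[OF gU]) (simp add: sum_distrib_right)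
      moreover have "(\<Sum>j\<in>{1..k}. sig j k (cf j)/(2*real k)) \<ge> 0"
        using cf sig_nonneg by (intro sum_nonneg) auto
      ultimately show ?thesis by blast
    qed
  qed
qed



theorem proposition2p3:
  shows "(\<forall>n\<ge>1. sed_digit n \<in> sed_space \<rightarrow>\<^sub>M count_space UNIV)
    \<and> (\<forall>k::nat\<ge>1. measure sed_space {x \<in> space sed_space. sed_digit 1 x = 2 * k}
                   = 2 / ((2 * real k - 1) * (2 * real k + 1)))
    \<and> (\<forall>n::nat\<ge>1. \<forall>a::nat \<Rightarrow> nat. \<forall>l::nat.
          (\<forall>i\<in>{1..n}. a i \<ge> 1) \<and> l \<ge> 1 \<and>
          measure sed_space {x \<in> space sed_space. \<forall>i\<in>{1..n}. sed_digit i x = 2 * a i} > 0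
          \<longrightarrow> measure sed_space {x \<in> space sed_space.
                  (\<forall>i\<in>{1..n}. sed_digit i x = 2 * a i) \<and> sed_digit (n + 1) x = 2 * l}
              / measure sed_space {x \<in> space sed_space. \<forall>i\<in>{1..n}. sed_digit i x = 2 * a i}
              = sed_trans (a n) l)
    \<and> (\<forall>n::nat\<ge>1. \<forall>k::nat\<ge>1. \<forall>l::nat\<ge>1.
          measure sed_space {x \<in> space sed_space. sed_digit n x = 2 * k} > 0
          \<longrightarrow> measure sed_space {x \<in> space sed_space.
                  sed_digit n x = 2 * k \<and> sed_digit (n + 1) x = 2 * l}
              / measure sed_space {x \<in> space sed_space. sed_digit n x = 2 * k}
              = sed_trans k l)"
proof (intro conjI allI impI ballI)
  fix n :: nat assume "n \<ge> 1"
  show "sed_digit n \<in> sed_space \<rightarrow>\<^sub>M count_space UNIV" by (rule digit_meas)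
next
  fix k :: nat assume k: "k \<ge> 1"
  have e: "{x \<in> space sed_space. sed_digit 1 x = 2 * k} = {x\<in>space M. sed_d1 x = 2*k}"
    by (simp add: sed_digit_def)
  have k1: "2*real k - 1 > 0" "2*real k + 1 > 0" "real k > 0" using k by auto
  have "measure M {x\<in>space M. sed_d1 x = 2*k} = 1/(2*real k) * (1/(2*real k - 1) + 1/(2*real k + 1))"
    using goodp_total[OF base1[OF k]] hh0[OF k] hh1[OF k] by simp
  also have "\<dots> = 2 / ((2 * real k - 1) * (2 * real k + 1))"
    using k1 by (simp add: field_simps)
  finally show "measure sed_space {x \<in> space sed_space. sed_digit 1 x = 2 * k} = 2 / ((2 * real k - 1) * (2 * real k + 1))"
    unfolding e .
next
  fix n :: nat and a :: "nat \<Rightarrow> nat" and l :: nat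
  assume n: "n \<ge> 1" and H: "(\<forall>i\<in>{1..n}. a i \<ge> 1) \<and> l \<ge> 1 \<and>
          measure sed_space {x \<in> space sed_space. \<forall>i\<in>{1..n}. sed_digit i x = 2 * a i} > 0"
  obtain c where c: "c \<ge> 0" and g: "goodp {x\<in>space M. \<forall>i\<in>{1..n}. sed_digit i x = 2 * a i} (sed_T ^^ n) (\<lambda>t. c * hh (a n) t)"
    using claim3[OF n] H by blast
  have an: "a n \<ge> 1" using H n by auto
  have e: "{x \<in> space sed_space. (\<forall>i\<in>{1..n}. sed_digit i x = 2 * a i) \<and> sed_digit (n + 1) x = 2 * l} =
    {x\<in>{x\<in>space M. \<forall>i\<in>{1..n}. sed_digit i x = 2 * a i}. sed_d1 ((sed_T ^^ n) x) = 2 * l}"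
    by (auto simp: sed_digit_def)
  show "measure sed_space {x \<in> space sed_space. (\<forall>i\<in>{1..n}. sed_digit i x = 2 * a i) \<and> sed_digit (n + 1) x = 2 * l}
      / measure sed_space {x \<in> space sed_space. \<forall>i\<in>{1..n}. sed_digit i x = 2 * a i} = sed_trans (a n) l"
    unfolding e using ratio[OF g c an] H by blast
next
  fix n k l :: nat
  assume n: "n \<ge> 1" and k: "k \<ge> 1" and l: "l \<ge> 1"
    and pos: "measure sed_space {x \<in> space sed_space. sed_digit n x = 2 * k} > 0"
  obtain c where c: "c \<ge> 0" and g: "goodp {x\<in>space M. sed_digit n x = 2 * k} (sed_T ^^ n) (\<lambda>t. c * hh k t)"
    using claim4[OF n] k by blast
  have e: "{x \<in> space sed_space. sed_digit n x = 2 * k \<and> sed_digit (n + 1) x = 2 * l} =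
    {x\<in>{x\<in>space M. sed_digit n x = 2 * k}. sed_d1 ((sed_T ^^ n) x) = 2 * l}"
    by (auto simp: sed_digit_def)
  show "measure sed_space {x \<in> space sed_space. sed_digit n x = 2 * k \<and> sed_digit (n + 1) x = 2 * l}
      / measure sed_space {x \<in> space sed_space. sed_digit n x = 2 * k} = sed_trans k l"
    unfolding e by (rule ratio[OF g c k l pos])
qed

end
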